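(* Let $M\ge 0$, $\mathcal{M}=\{0,\dots,M\}$, $T\ge 1$, $c_u,c_l>0$, $0\le\beta\le 1$, and let $P=(P_{i,j})_{i,j\in\mathcal{M}}$ be a stochastic matrix with rows $P_{i,\cdot}$. For a probability vector $b$ on $\mathcal{M}$ and $r\in\mathcal{M}$ let $$\bar C(b;r)=c_l\sum_{i=r}^{M} b(i)(i-r)+c_u\sum_{i=0}^{r-1} b(i)(r-i),$$ and, when $\sum_{j=r}^M b(j)>0$, let $T_r[b]$ be the probability vector with $T_r[b](i)=0$ for $i<r$ and $T_r[b](i)=b(i)/\sum_{j=r}^M b(j)$ for $i\ge r$ (viewed as a row vector, so $T_r[b]P$ is a probability vector). Define value functions on probability vectors recursively by $$V_T(b;r)=\bar C(b;r),\qquad V_t(b)=\min_{r\in\mathcal{M}}V_t(b;r),$$ $$V_t(b;r)=\bar C(b;r)+\beta\Big[\Big(\sum_{i=r}^M b(i)\Big)V_{t+1}(T_r[b]P)+\sum_{i=0}^{r-1} b(i)\,V_{t+1}(P_{i,\cdot})\Big],\quad t<T,$$ where the first term in brackets is taken to be $0$ when $\sum_{i=r}^M b(i)=0$. Then for every $t\in\{1,\dots,T\}$, every $r\in\mathcal{M}$, all probability vectors $b_1,b_2$ and every $\lambda\in[0,1]$, $$V_t(\lambda b_1+(1-\lambda)b_2;r)\ge \lambda V_t(b_1;r)+(1-\lambda)V_t(b_2;r),$$ $$V_t(\lambda b_1+(1-\lambda)b_2)\ge \lambda V_t(b_1)+(1-\lambda)V_t(b_2).$$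
   Context: This is the belief-based dynamic program for tracking a Markov chain $B_t$ on $\mathcal{M}$ with transition matrix $P$: choosing action $r$ costs $c_u(r-B_t)$ if $r>B_t$ (and then $B_t$ is fully observed) and $c_l(B_t-r)$ if $r\le B_t$ (and then only the event $B_t\ge r$ is observed); $b$ is the posterior distribution of the current state. *)

theory Defs
  imports Complex_Main
begin

text \<open>States are 0..M (type nat); vectors and matrices are functions, only values
  at indices \<le> M matter.\<close>

definition prob_vec :: "nat \<Rightarrow> (nat \<Rightarrow> real) \<Rightarrow> bool" where
  "prob_vec M b \<longleftrightarrow> (\<forall>i\<le>M. 0 \<le> b i) \<and> (\<Sum>i\<le>M. b i) = 1"

definition stochastic :: "nat \<Rightarrow> (nat \<Rightarrow> nat \<Rightarrow> real) \<Rightarrow> bool" where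
  "stochastic M P \<longleftrightarrow> (\<forall>i\<le>M. \<forall>j\<le>M. 0 \<le> P i j) \<and> (\<forall>i\<le>M. (\<Sum>j\<le>M. P i j) = 1)"

definition Cbar :: "nat \<Rightarrow> real \<Rightarrow> real \<Rightarrow> (nat \<Rightarrow> real) \<Rightarrow> nat \<Rightarrow> real" where
  "Cbar M cu cl b r =
     cl * (\<Sum>i\<in>{r..M}. b i * (real i - real r)) + cu * (\<Sum>i<r. b i * (real r - real i))"

definition Tr :: "nat \<Rightarrow> nat \<Rightarrow> (nat \<Rightarrow> real) \<Rightarrow> nat \<Rightarrow> real" where
  "Tr M r b = (\<lambda>i. if r \<le> i then b i / (\<Sum>j\<in>{r..M}. b j) else 0)"

definition vmul :: "nat \<Rightarrow> (nat \<Rightarrow> real) \<Rightarrow> (nat \<Rightarrow> nat \<Rightarrow> real) \<Rightarrow> nat \<Rightarrow> real" where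
  "vmul M q P = (\<lambda>j. \<Sum>i\<le>M. q i * P i j)"

text \<open>W n b r is V_{T-n}(b;r): n counts the remaining steps to the horizon T.\<close>
fun W :: "nat \<Rightarrow> real \<Rightarrow> real \<Rightarrow> real \<Rightarrow> (nat \<Rightarrow> nat \<Rightarrow> real) \<Rightarrow> nat \<Rightarrow> (nat \<Rightarrow> real) \<Rightarrow> nat \<Rightarrow> real" where
  "W M cu cl beta P 0 b r = Cbar M cu cl b r"
| "W M cu cl beta P (Suc n) b r =
     Cbar M cu cl b r + beta *
       ((if (\<Sum>i\<in>{r..M}. b i) = 0 then 0
         else (\<Sum>i\<in>{r..M}. b i) *
              Min ((\<lambda>s. W M cu cl beta P n (vmul M (Tr M r b) P) s) ` {..M}))
        + (\<Sum>i<r. b i * Min ((\<lambda>s. W M cu cl beta P n (\<lambda>j. P i j) s) ` {..M})))"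

definition Vr :: "nat \<Rightarrow> nat \<Rightarrow> real \<Rightarrow> real \<Rightarrow> real \<Rightarrow> (nat \<Rightarrow> nat \<Rightarrow> real) \<Rightarrow> nat \<Rightarrow> (nat \<Rightarrow> real) \<Rightarrow> nat \<Rightarrow> real" where
  "Vr M T cu cl beta P t b r = W M cu cl beta P (T - t) b r"

definition V :: "nat \<Rightarrow> nat \<Rightarrow> real \<Rightarrow> real \<Rightarrow> real \<Rightarrow> (nat \<Rightarrow> nat \<Rightarrow> real) \<Rightarrow> nat \<Rightarrow> (nat \<Rightarrow> real) \<Rightarrow> real" where
  "V M T cu cl beta P t b = Min ((\<lambda>r. Vr M T cu cl beta P t b r) ` {..M})"

end

theory Submission
  imports Defs
begin

definition Vm where "Vm M cu cl beta P n p = Min ((\<lambda>s. W M cu cl beta P n p s) ` {..M})"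
definition mass :: "nat \<Rightarrow> (nat \<Rightarrow> real) \<Rightarrow> real" where "mass M x = (\<Sum>i\<le>M. x i)"
definition H where "H M cu cl beta P n x =
  (if mass M x = 0 then 0 else mass M x * Vm M cu cl beta P n (\<lambda>i. x i / mass M x))"
definition tail :: "nat \<Rightarrow> (nat \<Rightarrow> real) \<Rightarrow> nat \<Rightarrow> real" where
  "tail r b = (\<lambda>i. if r \<le> i then b i else 0)"

definition concW where "concW M cu cl beta P n \<longleftrightarrow>
  (\<forall>b1 b2 lam r. prob_vec M b1 \<longrightarrow> prob_vec M b2 \<longrightarrow> 0 \<le> lam \<longrightarrow> lam \<le> 1 \<longrightarrow>
     W M cu cl beta P n (\<lambda>i. lam * b1 i + (1 - lam) * b2 i) r
       \<ge> lam * W M cu cl beta P n b1 r + (1 - lam) * W M cu cl beta P n b2 r)"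

lemma W_Suc_Vm: "W M cu cl beta P (Suc n) b r = Cbar M cu cl b r + beta *
       ((if (\<Sum>i\<in>{r..M}. b i) = 0 then 0
         else (\<Sum>i\<in>{r..M}. b i) * Vm M cu cl beta P n (vmul M (Tr M r b) P))
        + (\<Sum>i<r. b i * Vm M cu cl beta P n (P i)))"
  by (simp add: Vm_def)

lemma W_cong: "r \<le> M \<Longrightarrow> (\<forall>i\<le>M. p i = p' i) \<Longrightarrow> W M cu cl beta P n p r = W M cu cl beta P n p' r"
proof (induction n arbitrary: r)
  case 0
  then show ?case unfolding W.simps Cbar_def
    by (intro arg_cong2[where f="(+)"] arg_cong2[where f="(*)"] refl sum.cong) auto
next
  case (Suc n)
  have S: "(\<Sum>i\<in>{r..M}. p i) = (\<Sum>i\<in>{r..M}. p' i)" using Suc.prems by (intro sum.cong) auto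
  have V: "vmul M (Tr M r p) P = vmul M (Tr M r p') P"
    unfolding vmul_def Tr_def using Suc.prems S by (intro ext sum.cong) auto
  have B: "(\<Sum>i<r. p i * Vm M cu cl beta P n (P i)) = (\<Sum>i<r. p' i * Vm M cu cl beta P n (P i))"
    using Suc.prems by (intro sum.cong) auto
  have C: "Cbar M cu cl p r = Cbar M cu cl p' r" unfolding Cbar_def
    using Suc.prems by (intro arg_cong2[where f="(+)"] arg_cong2[where f="(*)"] refl sum.cong) auto
  show ?case unfolding W_Suc_Vm using S V B C by simp
qed

lemma Vm_cong: "(\<forall>i\<le>M. p i = p' i) \<Longrightarrow> Vm M cu cl beta P n p = Vm M cu cl beta P n p'"
  unfolding Vm_def by (intro arg_cong[where f=Min] image_cong refl W_cong) auto

lemma Vm_conc: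
  assumes "concW M cu cl beta P n" "prob_vec M b1" "prob_vec M b2" "0 \<le> lam" "lam \<le> 1"
  shows "Vm M cu cl beta P n (\<lambda>i. lam * b1 i + (1 - lam) * b2 i)
      \<ge> lam * Vm M cu cl beta P n b1 + (1 - lam) * Vm M cu cl beta P n b2"
proof -
  let ?m = "\<lambda>i. lam * b1 i + (1 - lam) * b2 i"
  have "Vm M cu cl beta P n ?m \<in> (\<lambda>s. W M cu cl beta P n ?m s) ` {..M}"
    unfolding Vm_def by (intro Min_in) auto
  then obtain r where r: "r \<le> M" "Vm M cu cl beta P n ?m = W M cu cl beta P n ?m r" by auto
  have 1: "Vm M cu cl beta P n b1 \<le> W M cu cl beta P n b1 r" unfolding Vm_def using r by (intro Min_le) auto
  have 2: "Vm M cu cl beta P n b2 \<le> W M cu cl beta P n b2 r" unfolding Vm_def using r by (intro Min_le) auto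
  have 3: "W M cu cl beta P n ?m r \<ge> lam * W M cu cl beta P n b1 r + (1 - lam) * W M cu cl beta P n b2 r"
    using assms unfolding concW_def by blast
  have "lam * Vm M cu cl beta P n b1 \<le> lam * W M cu cl beta P n b1 r" using 1 assms by (intro mult_left_mono) auto
  moreover have "(1-lam) * Vm M cu cl beta P n b2 \<le> (1-lam) * W M cu cl beta P n b2 r" using 2 assms by (intro mult_left_mono) auto
  ultimately show ?thesis using 3 r by linarith
qed

lemma prob_norm: "\<forall>i\<le>M. 0 \<le> x i \<Longrightarrow> mass M x > 0 \<Longrightarrow> prob_vec M (\<lambda>i. x i / mass M x)"
  unfolding prob_vec_def by (auto simp: sum_divide_distrib[symmetric] mass_def)

lemma mass_zero: "\<forall>i\<le>M. 0 \<le> x i \<Longrightarrow> mass M x = 0 \<Longrightarrow> \<forall>i\<le>M. x i = 0"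
  unfolding mass_def by (subst (asm) sum_nonneg_eq_0_iff) auto

lemma mass_nonneg: "\<forall>i\<le>M. 0 \<le> x i \<Longrightarrow> mass M x \<ge> 0"
  unfolding mass_def by (auto intro: sum_nonneg)

lemma H_hom: "c \<ge> 0 \<Longrightarrow> H M cu cl beta P n (\<lambda>i. c * x i) = c * H M cu cl beta P n x"
proof -
  assume c: "c \<ge> 0"
  have m: "mass M (\<lambda>i. c * x i) = c * mass M x" unfolding mass_def by (simp add: sum_distrib_left)
  show ?thesis
  proof (cases "c = 0 \<or> mass M x = 0")
    case True then show ?thesis unfolding H_def m by auto
  next
    case False
    then have "(\<lambda>i. c * x i / (c * mass M x)) = (\<lambda>i. x i / mass M x)" by auto
    then show ?thesis unfolding H_def m using False by auto
  qed
qed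

lemma H_super:
  assumes "concW M cu cl beta P n" "\<forall>i\<le>M. 0 \<le> x i" "\<forall>i\<le>M. 0 \<le> y i"
  shows "H M cu cl beta P n (\<lambda>i. x i + y i) \<ge> H M cu cl beta P n x + H M cu cl beta P n y"
proof -
  define a where "a = mass M x"
  define b where "b = mass M y"
  have a0: "a \<ge> 0" unfolding a_def by (rule mass_nonneg[OF assms(2)])
  have b0: "b \<ge> 0" unfolding b_def by (rule mass_nonneg[OF assms(3)])
  have mxy: "mass M (\<lambda>i. x i + y i) = a + b" unfolding mass_def a_def b_def by (simp add: sum.distrib)
  have Hx: "H M cu cl beta P n x = (if a = 0 then 0 else a * Vm M cu cl beta P n (\<lambda>i. x i / a))"
    unfolding H_def a_def ..
  have Hy: "H M cu cl beta P n y = (if b = 0 then 0 else b * Vm M cu cl beta P n (\<lambda>i. y i / b))"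
    unfolding H_def b_def ..
  have Hxy: "H M cu cl beta P n (\<lambda>i. x i + y i) = (if a + b = 0 then 0 else (a + b) * Vm M cu cl beta P n (\<lambda>i. (x i + y i) / (a + b)))"
    unfolding H_def mxy ..
  show ?thesis
  proof (cases "a = 0")
    case True
    have "\<forall>i\<le>M. x i = 0" using mass_zero[OF assms(2)] True unfolding a_def by simp
    then have "Vm M cu cl beta P n (\<lambda>i. (x i + y i) / (a+b)) = Vm M cu cl beta P n (\<lambda>i. y i / b)"
      using True by (intro Vm_cong) simp
    then show ?thesis unfolding Hx Hy Hxy using True by simp
  next
    case Fa: False
    show ?thesis
    proof (cases "b = 0")
      case True
      have "\<forall>i\<le>M. y i = 0" using mass_zero[OF assms(3)] True unfolding b_def by simp
      then have "Vm M cu cl beta P n (\<lambda>i. (x i + y i) / (a+b)) = Vm M cu cl beta P n (\<lambda>i. x i / a)"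
        using True by (intro Vm_cong) simp
      then show ?thesis unfolding Hx Hy Hxy using True Fa by simp
    next
      case Fb: False
      have ap: "a > 0" using a0 Fa by auto
      have bp: "b > 0" using b0 Fb by auto
      define lam where "lam = a / (a+b)"
      have l1: "1 - lam = b / (a+b)" unfolding lam_def using ap bp by (simp add: field_simps)
      have eq: "(\<lambda>i. (x i + y i) / (a+b)) = (\<lambda>i. lam * (x i / a) + (1 - lam) * (y i / b))"
      proof
        fix i show "(x i + y i) / (a+b) = lam * (x i / a) + (1 - lam) * (y i / b)"
        proof -
          have "lam * (x i / a) = x i / (a+b)" unfolding lam_def using ap by simp
          moreover have "(1 - lam) * (y i / b) = y i / (a+b)" unfolding l1 using bp by simp
          ultimately show ?thesis by (simp add: add_divide_distrib)
        qed
      qed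
      have p1: "prob_vec M (\<lambda>i. x i / a)" using prob_norm[OF assms(2)] ap unfolding a_def by simp
      have p2: "prob_vec M (\<lambda>i. y i / b)" using prob_norm[OF assms(3)] bp unfolding b_def by simp
      have lb: "0 \<le> lam" "lam \<le> 1" unfolding lam_def using ap bp by auto
      define V1 where "V1 = Vm M cu cl beta P n (\<lambda>i. x i / a)"
      define V2 where "V2 = Vm M cu cl beta P n (\<lambda>i. y i / b)"
      define V3 where "V3 = Vm M cu cl beta P n (\<lambda>i. (x i + y i) / (a+b))"
      have c: "V3 \<ge> lam * V1 + (1 - lam) * V2"
        unfolding V3_def V1_def V2_def eq by (rule Vm_conc[OF assms(1) p1 p2 lb])
      have "(a+b) * V3 \<ge> (a+b) * (lam * V1 + (1 - lam) * V2)"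
        using c ap bp by (intro mult_left_mono) auto
      also have "(a+b) * (lam * V1 + (1 - lam) * V2) = a * V1 + b * V2"
      proof -
        have "(a+b) * lam = a" unfolding lam_def using ap bp by simp
        moreover have "(a+b) * (1 - lam) = b" unfolding l1 using ap bp by simp
        ultimately show ?thesis by (simp add: distrib_left mult.assoc[symmetric])
      qed
      finally show ?thesis unfolding Hx Hy Hxy V1_def[symmetric] V2_def[symmetric] V3_def[symmetric]
        using ap bp by simp
    qed
  qed
qed

lemma A_eq:
  assumes "stochastic M P"
  shows "(if (\<Sum>i\<in>{r..M}. b i) = 0 then 0
         else (\<Sum>i\<in>{r..M}. b i) * Vm M cu cl beta P n (vmul M (Tr M r b) P))
       = H M cu cl beta P n (vmul M (tail r b) P)"
proof -
  define S where "S = (\<Sum>i\<in>{r..M}. b i)"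
  have "mass M (vmul M (tail r b) P) = (\<Sum>j\<le>M. \<Sum>i\<le>M. tail r b i * P i j)"
    unfolding mass_def vmul_def by simp
  also have "\<dots> = (\<Sum>i\<le>M. tail r b i * (\<Sum>j\<le>M. P i j))"
    by (subst sum.swap) (simp add: sum_distrib_left)
  also have "\<dots> = (\<Sum>i\<le>M. tail r b i)"
    using assms unfolding stochastic_def by (intro sum.cong) auto
  also have "\<dots> = S" unfolding S_def tail_def
  proof -
    have "{r..M} = {..M} \<inter> {i. r \<le> i}" by auto
    then show "(\<Sum>i\<le>M. if r \<le> i then b i else 0) = sum b {r..M}"
      by (simp add: sum.inter_restrict)
  qed
  finally have m: "mass M (vmul M (tail r b) P) = S" .
  show ?thesis
  proof (cases "S = 0")
    case True then show ?thesis unfolding H_def m S_def[symmetric] by simp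
  next
    case False
    have "(\<lambda>i. vmul M (tail r b) P i / S) = vmul M (Tr M r b) P"
      unfolding vmul_def Tr_def tail_def S_def[symmetric]
      by (auto simp: sum_divide_distrib intro!: ext sum.cong)
    then show ?thesis unfolding H_def m S_def[symmetric] using False by simp
  qed
qed

lemma sum_lin: "(\<Sum>i\<in>A. (lam * b1 i + (1 - lam) * b2 i) * (g i::real))
   = lam * (\<Sum>i\<in>A. b1 i * g i) + (1 - lam) * (\<Sum>i\<in>A. b2 i * g i)"
  unfolding sum_distrib_left sum.distrib[symmetric] by (rule sum.cong) (auto simp: algebra_simps)

lemma Cbar_lin: "Cbar M cu cl (\<lambda>i. lam * b1 i + (1 - lam) * b2 i) r
   = lam * Cbar M cu cl b1 r + (1 - lam) * Cbar M cu cl b2 r"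
  unfolding Cbar_def sum_lin by (simp add: algebra_simps)

lemma B_lin: "(\<Sum>i<r. (lam * b1 i + (1 - lam) * b2 i) * (f i::real))
   = lam * (\<Sum>i<r. b1 i * f i) + (1 - lam) * (\<Sum>i<r. b2 i * f i)"
  by (rule sum_lin)

lemma vmul_lin: "vmul M (tail r (\<lambda>i. lam * b1 i + (1 - lam) * b2 i)) P
   = (\<lambda>j. lam * vmul M (tail r b1) P j + (1 - lam) * vmul M (tail r b2) P j)"
proof -
  have t: "tail r (\<lambda>i. lam * b1 i + (1 - lam) * b2 i) = (\<lambda>i. lam * tail r b1 i + (1 - lam) * tail r b2 i)"
    unfolding tail_def by auto
  show ?thesis unfolding t vmul_def sum_lin ..
qed

lemma vmul_nonneg: "stochastic M P \<Longrightarrow> prob_vec M b \<Longrightarrow> \<forall>j\<le>M. 0 \<le> vmul M (tail r b) P j"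
  unfolding vmul_def tail_def stochastic_def prob_vec_def by (auto intro!: sum_nonneg)

lemma concW_all:
  assumes "stochastic M P" "0 \<le> beta"
  shows "concW M cu cl beta P n"
proof (induction n)
  case 0
  then show ?case unfolding concW_def by (simp add: Cbar_lin)
next
  case (Suc n)
  show ?case unfolding concW_def
  proof (intro allI impI)
    fix b1 b2 lam r
    assume p1: "prob_vec M b1" and p2: "prob_vec M b2" and l: "0 \<le> (lam::real)" "lam \<le> 1"
    let ?m = "\<lambda>i. lam * b1 i + (1 - lam) * b2 i"
    let ?H = "H M cu cl beta P n"
    let ?x1 = "vmul M (tail r b1) P" and ?x2 = "vmul M (tail r b2) P"
    have n1: "\<forall>i\<le>M. 0 \<le> lam * ?x1 i" using vmul_nonneg[OF assms(1) p1] l by auto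
    have n2: "\<forall>i\<le>M. 0 \<le> (1 - lam) * ?x2 i" using vmul_nonneg[OF assms(1) p2] l by auto
    have "?H (vmul M (tail r ?m) P) \<ge> ?H (\<lambda>i. lam * ?x1 i) + ?H (\<lambda>i. (1 - lam) * ?x2 i)"
      unfolding vmul_lin using H_super[OF Suc n1 n2] by simp
    also have "?H (\<lambda>i. lam * ?x1 i) + ?H (\<lambda>i. (1 - lam) * ?x2 i) = lam * ?H ?x1 + (1 - lam) * ?H ?x2"
      using l by (simp add: H_hom)
    finally have A: "?H (vmul M (tail r ?m) P) \<ge> lam * ?H ?x1 + (1 - lam) * ?H ?x2" .
    have "beta * ?H (vmul M (tail r ?m) P) \<ge> beta * (lam * ?H ?x1 + (1 - lam) * ?H ?x2)"
      using A assms(2) by (intro mult_left_mono) auto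
    then show "W M cu cl beta P (Suc n) ?m r \<ge>
       lam * W M cu cl beta P (Suc n) b1 r + (1 - lam) * W M cu cl beta P (Suc n) b2 r"
    proof -
      let ?B = "\<lambda>b. (\<Sum>i<r. b i * Vm M cu cl beta P n (P i))"
      have e1: "W M cu cl beta P (Suc n) ?m r = (lam * Cbar M cu cl b1 r + (1 - lam) * Cbar M cu cl b2 r)
         + beta * ?H (vmul M (tail r ?m) P) + beta * (lam * ?B b1 + (1 - lam) * ?B b2)"
        unfolding W_Suc_Vm A_eq[OF assms(1)] Cbar_lin B_lin by (simp only: distrib_left add.assoc)
      have e2: "\<And>b. W M cu cl beta P (Suc n) b r = Cbar M cu cl b r + beta * ?H (vmul M (tail r b) P) + beta * ?B b"
        unfolding W_Suc_Vm A_eq[OF assms(1)] by (simp only: distrib_left add.assoc)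
      have e3: "\<And>c1 c2 h1 h2 d1 d2 :: real. lam * (c1 + beta * h1 + beta * d1) + (1 - lam) * (c2 + beta * h2 + beta * d2)
         = (lam * c1 + (1 - lam) * c2) + beta * (lam * h1 + (1 - lam) * h2) + beta * (lam * d1 + (1 - lam) * d2)"
        by (simp add: algebra_simps)
      show ?thesis unfolding e1 e2 e3 using \<open>beta * ?H (vmul M (tail r ?m) P) \<ge> _\<close> by linarith
    qed
  qed
qed

theorem lemma3:
  fixes M T :: nat and cu cl beta lam :: real and P :: "nat \<Rightarrow> nat \<Rightarrow> real"
    and b1 b2 :: "nat \<Rightarrow> real" and t r :: nat
  assumes "T \<ge> 1" and "cu > 0" and "cl > 0" and "0 \<le> beta" and "beta \<le> 1"
    and "stochastic M P"
    and "1 \<le> t" and "t \<le> T" and "r \<le> M"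
    and "prob_vec M b1" and "prob_vec M b2"
    and "0 \<le> lam" and "lam \<le> 1"
  shows "Vr M T cu cl beta P t (\<lambda>i. lam * b1 i + (1 - lam) * b2 i) r
           \<ge> lam * Vr M T cu cl beta P t b1 r + (1 - lam) * Vr M T cu cl beta P t b2 r
         \<and> V M T cu cl beta P t (\<lambda>i. lam * b1 i + (1 - lam) * b2 i)
           \<ge> lam * V M T cu cl beta P t b1 + (1 - lam) * V M T cu cl beta P t b2"
proof -
  have c: "concW M cu cl beta P (T - t)" using concW_all assms by blast
  have "V M T cu cl beta P t = Vm M cu cl beta P (T - t)" unfolding V_def Vr_def Vm_def by (rule ext) simp
  moreover have "W M cu cl beta P (T - t) (\<lambda>i. lam * b1 i + (1 - lam) * b2 i) r
           \<ge> lam * W M cu cl beta P (T - t) b1 r + (1 - lam) * W M cu cl beta P (T - t) b2 r"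
    using c assms(10,11,12,13) unfolding concW_def by blast
  ultimately show ?thesis unfolding Vr_def using Vm_conc[OF c assms(10,11,12,13)] by simp
qed

end
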